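(* For every Lie groupoid $\mathscr G\rightrightarrows M$, the group ${\rm Diff}_{r(\mathscr G)}(\mathscr G)$ of diffeomorphisms $\Phi\colon\mathscr G\to\mathscr G$ that are equivariant for the canonical right $\mathscr G$-module structure $(\mathscr G,s,r)$ (i.e. $s\circ\Phi=s$ and $\Phi(g.h)=\Phi(g).h$ whenever $s(g)=t(h)$) coincides with $L(\mathbb B)=\{L_\beta\mid\beta\in\mathbb B\}$.
   Context: A Lie groupoid $\mathscr G\rightrightarrows M$ has surjective submersions $s,t\colon\mathscr G\to M$ (source, target), units ${\rm Id}_m$, inverses $g^{-1}$ and multiplication $g.h$ defined iff $s(g)=t(h)$. A (global) bisection is a smooth map $\beta\colon M\to\mathscr G$ with $s\circ\beta={\rm id}_M$ and $t\circ\beta\in{\rm Diff}(M)$; $\mathbb B$ denotes the group of bisections. For $\beta\in\mathbb B$, the left multiplication $L_\beta\colon\mathscr G\to\mathscr G$ is $L_\beta(g)=\beta(t(g)).g$. The right translations are $r_h(g)=g.h$ for $s(g)=t(h)$. *)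

theory Defs
  imports "HOL-Analysis.Analysis"
begin

inductive_set iter_derivs :: "('a::real_normed_vector \<Rightarrow> 'b::real_normed_vector) \<Rightarrow> ('a \<Rightarrow> 'b) set"
  for f where
  base: "f \<in> iter_derivs f"
| step: "g \<in> iter_derivs f \<Longrightarrow> (\<lambda>x. frechet_derivative g (at x) v) \<in> iter_derivs f"

definition smooth_on :: "'a::euclidean_space set \<Rightarrow> ('a \<Rightarrow> 'b::euclidean_space) \<Rightarrow> bool" where
  "smooth_on U f \<longleftrightarrow> open U \<and> (\<forall>g\<in>iter_derivs f. g differentiable_on U)"

section \<open>Smooth manifolds (carrier = the whole type, with its topology)\<close>

definition is_chart :: "'a::topological_space set \<times> ('a \<Rightarrow> 'e::euclidean_space) \<Rightarrow> bool" where
  "is_chart c \<longleftrightarrow> (case c of (U, \<phi>) \<Rightarrow>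
     open U \<and> open (\<phi> ` U) \<and> homeomorphism U (\<phi> ` U) \<phi> (inv_into U \<phi>))"

definition smooth_atlas :: "('a::topological_space set \<times> ('a \<Rightarrow> 'e::euclidean_space)) set \<Rightarrow> bool" where
  "smooth_atlas A \<longleftrightarrow> (\<forall>c\<in>A. is_chart c) \<and> \<Union>(fst ` A) = UNIV \<and>
     (\<forall>(U,\<phi>)\<in>A. \<forall>(V,\<psi>)\<in>A. smooth_on (\<phi> ` (U \<inter> V)) (\<psi> \<circ> inv_into U \<phi>))"

definition smooth_map_open ::
  "('a::topological_space set \<times> ('a \<Rightarrow> 'e::euclidean_space)) set \<Rightarrow>
   ('b::topological_space set \<times> ('b \<Rightarrow> 'f::euclidean_space)) set \<Rightarrow> 'a set \<Rightarrow> ('a \<Rightarrow> 'b) \<Rightarrow> bool" where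
  "smooth_map_open A B W f \<longleftrightarrow> open W \<and> continuous_on W f \<and>
     (\<forall>(U,\<phi>)\<in>A. \<forall>(V,\<psi>)\<in>B. smooth_on (\<phi> ` (U \<inter> W \<inter> f -` V)) (\<psi> \<circ> f \<circ> inv_into U \<phi>))"

definition smooth_map ::
  "('a::topological_space set \<times> ('a \<Rightarrow> 'e::euclidean_space)) set \<Rightarrow>
   ('b::topological_space set \<times> ('b \<Rightarrow> 'f::euclidean_space)) set \<Rightarrow> ('a \<Rightarrow> 'b) \<Rightarrow> bool" where
  "smooth_map A B f \<longleftrightarrow> smooth_map_open A B UNIV f"

definition smooth_map_on ::
  "('a::topological_space set \<times> ('a \<Rightarrow> 'e::euclidean_space)) set \<Rightarrow>
   ('b::topological_space set \<times> ('b \<Rightarrow> 'f::euclidean_space)) set \<Rightarrow> 'a set \<Rightarrow> ('a \<Rightarrow> 'b) \<Rightarrow> bool" where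
  "smooth_map_on A B S f \<longleftrightarrow>
     (\<forall>p\<in>S. \<exists>W F. p \<in> W \<and> smooth_map_open A B W F \<and> (\<forall>q\<in>W \<inter> S. F q = f q))"

definition diffeo ::
  "('a::topological_space set \<times> ('a \<Rightarrow> 'e::euclidean_space)) set \<Rightarrow> ('a \<Rightarrow> 'a) \<Rightarrow> bool" where
  "diffeo A f \<longleftrightarrow> bij f \<and> smooth_map A A f \<and> smooth_map A A (inv f)"

definition submersion ::
  "('a::topological_space set \<times> ('a \<Rightarrow> 'e::euclidean_space)) set \<Rightarrow>
   ('b::topological_space set \<times> ('b \<Rightarrow> 'f::euclidean_space)) set \<Rightarrow> ('a \<Rightarrow> 'b) \<Rightarrow> bool" where
  "submersion A B f \<longleftrightarrow> surj f \<and> smooth_map A B f \<and>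
     (\<forall>(U,\<phi>)\<in>A. \<forall>(V,\<psi>)\<in>B. \<forall>x\<in>\<phi> ` (U \<inter> f -` V).
        surj (frechet_derivative (\<psi> \<circ> f \<circ> inv_into U \<phi>) (at x)))"

definition prod_atlas ::
  "('a::topological_space set \<times> ('a \<Rightarrow> 'e::euclidean_space)) set \<Rightarrow>
   ('b::topological_space set \<times> ('b \<Rightarrow> 'f::euclidean_space)) set \<Rightarrow>
   (('a \<times> 'b) set \<times> ('a \<times> 'b \<Rightarrow> 'e \<times> 'f)) set" where
  "prod_atlas A B = {(U \<times> V, \<lambda>(x,y). (\<phi> x, \<psi> y)) | U \<phi> V \<psi>. (U,\<phi>) \<in> A \<and> (V,\<psi>) \<in> B}"

definition composable :: "('g \<Rightarrow> 'm) \<Rightarrow> ('g \<Rightarrow> 'm) \<Rightarrow> ('g \<times> 'g) set" where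
  "composable s t = {(g,h). s g = t h}"

text \<open>Lie groupoid G \<rightrightarrows> M: G is the type 'g with atlas AG, M the (Hausdorff) type 'm
  with atlas AM; s, t source/target, u units, i inverse, mul multiplication
  (mul g h meaningful iff s g = t h).\<close>
definition lie_groupoid ::
  "('g::topological_space set \<times> ('g \<Rightarrow> 'e::euclidean_space)) set \<Rightarrow>
   ('m::t2_space set \<times> ('m \<Rightarrow> 'f::euclidean_space)) set \<Rightarrow>
   ('g \<Rightarrow> 'm) \<Rightarrow> ('g \<Rightarrow> 'm) \<Rightarrow> ('m \<Rightarrow> 'g) \<Rightarrow> ('g \<Rightarrow> 'g) \<Rightarrow> ('g \<Rightarrow> 'g \<Rightarrow> 'g) \<Rightarrow> bool" where
  "lie_groupoid AG AM s t u i mul \<longleftrightarrow>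
     smooth_atlas AG \<and> smooth_atlas AM \<and>
     submersion AG AM s \<and> submersion AG AM t \<and>
     smooth_map AM AG u \<and> smooth_map AG AG i \<and>
     smooth_map_on (prod_atlas AG AG) AG (composable s t) (\<lambda>(g,h). mul g h) \<and>
     (\<forall>m. s (u m) = m \<and> t (u m) = m) \<and>
     (\<forall>g h. s g = t h \<longrightarrow> s (mul g h) = s h \<and> t (mul g h) = t g) \<and>
     (\<forall>g h k. s g = t h \<longrightarrow> s h = t k \<longrightarrow> mul (mul g h) k = mul g (mul h k)) \<and>
     (\<forall>g. mul (u (t g)) g = g \<and> mul g (u (s g)) = g) \<and>
     (\<forall>g. s (i g) = t g \<and> t (i g) = s g \<and> mul g (i g) = u (t g) \<and> mul (i g) g = u (s g))"

definition bisection ::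
  "('g::topological_space set \<times> ('g \<Rightarrow> 'e::euclidean_space)) set \<Rightarrow>
   ('m::topological_space set \<times> ('m \<Rightarrow> 'f::euclidean_space)) set \<Rightarrow>
   ('g \<Rightarrow> 'm) \<Rightarrow> ('g \<Rightarrow> 'm) \<Rightarrow> ('m \<Rightarrow> 'g) \<Rightarrow> bool" where
  "bisection AG AM s t \<beta> \<longleftrightarrow> smooth_map AM AG \<beta> \<and> s \<circ> \<beta> = id \<and> diffeo AM (t \<circ> \<beta>)"

definition left_mult :: "('g \<Rightarrow> 'm) \<Rightarrow> ('g \<Rightarrow> 'g \<Rightarrow> 'g) \<Rightarrow> ('m \<Rightarrow> 'g) \<Rightarrow> 'g \<Rightarrow> 'g" where
  "left_mult t mul \<beta> g = mul (\<beta> (t g)) g"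

definition right_equivariant_diffeos ::
  "('g::topological_space set \<times> ('g \<Rightarrow> 'e::euclidean_space)) set \<Rightarrow>
   ('g \<Rightarrow> 'm) \<Rightarrow> ('g \<Rightarrow> 'm) \<Rightarrow> ('g \<Rightarrow> 'g \<Rightarrow> 'g) \<Rightarrow> ('g \<Rightarrow> 'g) set" where
  "right_equivariant_diffeos AG s t mul =
     {\<Phi>. diffeo AG \<Phi> \<and> s \<circ> \<Phi> = s \<and> (\<forall>g h. s g = t h \<longrightarrow> \<Phi> (mul g h) = mul (\<Phi> g) h)}"

end

theory Submission
  imports Defs
begin


fun ider :: "('a::real_normed_vector \<Rightarrow> 'b::real_normed_vector) \<Rightarrow> 'a list \<Rightarrow> 'a \<Rightarrow> 'b" where
  "ider h [] = h"
| "ider h (v#vs) = (\<lambda>x. frechet_derivative (ider h vs) (at x) v)"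

lemma iter_derivs_eq: "iter_derivs h = range (ider h)"
proof
  show "iter_derivs h \<subseteq> range (ider h)"
  proof
    fix g assume "g \<in> iter_derivs h"
    then show "g \<in> range (ider h)"
    proof induct
      case base show ?case by (rule image_eqI[of _ _ "[]"]) auto
    next
      case (step g v)
      then obtain vs where "g = ider h vs" by auto
      then show ?case by (intro image_eqI[of _ _ "v#vs"]) auto
    qed
  qed
next
  show "range (ider h) \<subseteq> iter_derivs h"
  proof
    fix g assume "g \<in> range (ider h)"
    then obtain vs where g: "g = ider h vs" by auto
    have "ider h vs \<in> iter_derivs h"
    proof (induction vs)
      case Nil show ?case by (simp add: iter_derivs.base)
    next
      case (Cons v vs) show ?case using iter_derivs.step[OF Cons.IH, of v] by simp
    qed
    then show "g \<in> iter_derivs h" using g by simp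
  qed
qed

definition smk :: "nat \<Rightarrow> 'a::real_normed_vector set \<Rightarrow> ('a \<Rightarrow> 'b::real_normed_vector) \<Rightarrow> bool" where
  "smk k S h \<longleftrightarrow> (\<forall>vs. length vs \<le> k \<longrightarrow> ider h vs differentiable_on S)"

lemma ider_append: "ider h (vs @ [v]) = ider (\<lambda>x. frechet_derivative h (at x) v) vs"
  by (induction vs) auto

lemma smk_0: "smk 0 S h \<longleftrightarrow> h differentiable_on S"
  by (simp add: smk_def)

lemma smk_Suc: "smk (Suc k) S h \<longleftrightarrow> h differentiable_on S \<and> (\<forall>v. smk k S (\<lambda>x. frechet_derivative h (at x) v))"
proof
  assume a: "smk (Suc k) S h"
  have "h differentiable_on S" using a[unfolded smk_def, rule_format, of "[]"] by simp
  moreover have "smk k S (\<lambda>x. frechet_derivative h (at x) v)" for v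
    unfolding smk_def
  proof (intro allI impI)
    fix vs :: "'a list" assume "length vs \<le> k"
    then show "ider (\<lambda>x. frechet_derivative h (at x) v) vs differentiable_on S"
      using a[unfolded smk_def, rule_format, of "vs @ [v]"] by (simp add: ider_append)
  qed
  ultimately show "h differentiable_on S \<and> (\<forall>v. smk k S (\<lambda>x. frechet_derivative h (at x) v))" by blast
next
  assume a: "h differentiable_on S \<and> (\<forall>v. smk k S (\<lambda>x. frechet_derivative h (at x) v))"
  show "smk (Suc k) S h"
    unfolding smk_def
  proof (intro allI impI)
    fix vs :: "'a list" assume l: "length vs \<le> Suc k"
    show "ider h vs differentiable_on S"
    proof (cases vs rule: rev_exhaust)
      case Nil then show ?thesis using a by simp
    next
      case (snoc ws v)
      then show ?thesis using a l unfolding smk_def by (simp add: ider_append)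
    qed
  qed
qed

lemma smk_mono: "smk k S h \<Longrightarrow> m \<le> k \<Longrightarrow> smk m S h"
  by (auto simp: smk_def)

lemma smk_Suc_mono: "smk (Suc k) S h \<Longrightarrow> smk k S h"
  by (auto simp: smk_def)

lemma fd_cong:
  assumes "open X" "x \<in> X" "\<And>y. y \<in> X \<Longrightarrow> f y = g y"
  shows "frechet_derivative f (at x) = frechet_derivative g (at x)"
proof -
  have "(f has_derivative D) (at x) \<longleftrightarrow> (g has_derivative D) (at x)" for D
    using has_derivative_transform_within_open[of f D x UNIV X g]
      has_derivative_transform_within_open[of g D x UNIV X f] assms by auto
  then show ?thesis unfolding frechet_derivative_def by simp
qed

lemma ider_cong:
  assumes "open X" "\<And>y. y \<in> X \<Longrightarrow> f y = g y" "y \<in> X"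
  shows "ider f vs y = ider g vs y"
  using assms(3)
proof (induction vs arbitrary: y)
  case Nil then show ?case using assms by simp
next
  case (Cons v vs)
  have "frechet_derivative (ider f vs) (at y) = frechet_derivative (ider g vs) (at y)"
    by (rule fd_cong[OF assms(1) Cons.prems]) (rule Cons.IH)
  then show ?case by simp
qed

lemma diff_on_cong:
  assumes "open X" "\<And>y. y \<in> X \<Longrightarrow> f y = g y" "f differentiable_on X"
  shows "g differentiable_on X"
  unfolding differentiable_on_eq_differentiable_at[OF assms(1)]
proof
  fix x assume x: "x \<in> X"
  then obtain D where "(f has_derivative D) (at x)"
    using assms(3) unfolding differentiable_on_eq_differentiable_at[OF assms(1)] differentiable_def by blast
  then have "(g has_derivative D) (at x)"
    by (rule has_derivative_transform_within_open[OF _ assms(1) x assms(2)])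
  then show "g differentiable at x" unfolding differentiable_def by blast
qed

lemma smk_cong:
  assumes "open S" "\<And>y. y \<in> S \<Longrightarrow> f y = g y" "smk k S f"
  shows "smk k S g"
  unfolding smk_def
proof (intro allI impI)
  fix vs :: "'a list" assume "length vs \<le> k"
  then have d: "ider f vs differentiable_on S" using assms(3) unfolding smk_def by blast
  show "ider g vs differentiable_on S"
    by (rule diff_on_cong[OF assms(1) _ d]) (rule ider_cong[OF assms(1,2)], assumption)
qed

lemma diff_on_at:
  assumes "open S" "h differentiable_on S" "x \<in> S"
  shows "(h has_derivative frechet_derivative h (at x)) (at x)"
  using assms differentiable_on_eq_differentiable_at frechet_derivative_works by blast

lemma smk_const: "smk k S (\<lambda>x. c)"
proof (induction k arbitrary: c)
  case 0 then show ?case by (simp add: smk_0)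
next
  case (Suc k) then show ?case by (simp add: smk_Suc)
qed

lemma smk_add:
  assumes "open S" "smk k S f" "smk k S g"
  shows "smk k S (\<lambda>x. f x + g x)"
  using assms(2,3)
proof (induction k arbitrary: f g)
  case 0 then show ?case by (simp add: smk_0 differentiable_on_add)
next
  case (Suc k)
  have df: "f differentiable_on S" and dg: "g differentiable_on S"
    using Suc.prems by (auto simp: smk_Suc)
  have "smk k S (\<lambda>x. frechet_derivative (\<lambda>x. f x + g x) (at x) v)" for v
  proof (rule smk_cong[OF assms(1)])
    fix y assume y: "y \<in> S"
    have "((\<lambda>x. f x + g x) has_derivative (\<lambda>w. frechet_derivative f (at y) w + frechet_derivative g (at y) w)) (at y)"
      using diff_on_at[OF assms(1) df y] diff_on_at[OF assms(1) dg y] by (rule has_derivative_add)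
    then show "frechet_derivative f (at y) v + frechet_derivative g (at y) v = frechet_derivative (\<lambda>x. f x + g x) (at y) v"
      using frechet_derivative_at by metis
  next
    show "smk k S (\<lambda>y. frechet_derivative f (at y) v + frechet_derivative g (at y) v)"
      using Suc by (auto simp: smk_Suc)
  qed
  then show ?case using df dg by (simp add: smk_Suc differentiable_on_add)
qed

lemma smk_sum:
  assumes "open S" "finite B" "\<And>b. b \<in> B \<Longrightarrow> smk k S (F b)"
  shows "smk k S (\<lambda>x. \<Sum>b\<in>B. F b x)"
  using assms(2,3)
proof (induction B rule: finite_induct)
  case empty then show ?case by (simp add: smk_const)
next
  case (insert b B) then show ?case by (simp add: smk_add assms(1))
qed

lemma diff_on_linear:
  assumes "bounded_linear L" "f differentiable_on S"
  shows "(\<lambda>x. L (f x)) differentiable_on S"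
  unfolding differentiable_on_def
proof
  fix x assume "x \<in> S"
  then obtain D where "(f has_derivative D) (at x within S)"
    using assms(2) unfolding differentiable_on_def differentiable_def by blast
  then have "((\<lambda>x. L (f x)) has_derivative (\<lambda>w. L (D w))) (at x within S)"
    by (rule bounded_linear.has_derivative[OF assms(1)])
  then show "(\<lambda>x. L (f x)) differentiable at x within S" unfolding differentiable_def by blast
qed

lemma smk_linear:
  assumes "open S" "bounded_linear L" "smk k S f"
  shows "smk k S (\<lambda>x. L (f x))"
  using assms(3)
proof (induction k arbitrary: f)
  case 0 then show ?case
    by (simp add: smk_0 diff_on_linear[OF assms(2)])
next
  case (Suc k)
  have df: "f differentiable_on S" using Suc.prems by (auto simp: smk_Suc)
  have d2: "(\<lambda>x. L (f x)) differentiable_on S"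
    using df by (simp add: diff_on_linear[OF assms(2)])
  have "smk k S (\<lambda>x. frechet_derivative (\<lambda>x. L (f x)) (at x) v)" for v
  proof (rule smk_cong[OF assms(1)])
    fix y assume y: "y \<in> S"
    have "((\<lambda>x. L (f x)) has_derivative (\<lambda>w. L (frechet_derivative f (at y) w))) (at y)"
      using diff_on_at[OF assms(1) df y] by (rule bounded_linear.has_derivative[OF assms(2)])
    then show "L (frechet_derivative f (at y) v) = frechet_derivative (\<lambda>x. L (f x)) (at y) v"
      using frechet_derivative_at by metis
  next
    show "smk k S (\<lambda>y. L (frechet_derivative f (at y) v))"
      using Suc by (auto simp: smk_Suc)
  qed
  then show ?case using d2 by (simp add: smk_Suc)
qed

lemma smk_scaleR:
  fixes f :: "'a::real_normed_vector \<Rightarrow> real" and g :: "'a \<Rightarrow> 'b::real_normed_vector"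
  assumes "open S" "smk k S f" "smk k S g"
  shows "smk k S (\<lambda>x. f x *\<^sub>R g x)"
  using assms(2,3)
proof (induction k arbitrary: f g)
  case 0 then show ?case by (simp add: smk_0 differentiable_on_scaleR)
next
  case (Suc k)
  have df: "f differentiable_on S" and dg: "g differentiable_on S"
    using Suc.prems by (auto simp: smk_Suc)
  have fk: "smk k S f" "smk k S g" using Suc.prems smk_Suc_mono by auto
  have "smk k S (\<lambda>x. frechet_derivative (\<lambda>x. f x *\<^sub>R g x) (at x) v)" for v
  proof (rule smk_cong[OF assms(1)])
    fix y assume y: "y \<in> S"
    have "((\<lambda>x. f x *\<^sub>R g x) has_derivative (\<lambda>w. f y *\<^sub>R frechet_derivative g (at y) w + frechet_derivative f (at y) w *\<^sub>R g y)) (at y)"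
      using diff_on_at[OF assms(1) df y] diff_on_at[OF assms(1) dg y] by (rule has_derivative_scaleR)
    then show "f y *\<^sub>R frechet_derivative g (at y) v + frechet_derivative f (at y) v *\<^sub>R g y = frechet_derivative (\<lambda>x. f x *\<^sub>R g x) (at y) v"
      using frechet_derivative_at by metis
  next
    have "smk k S (\<lambda>y. frechet_derivative g (at y) v)" "smk k S (\<lambda>y. frechet_derivative f (at y) v)"
      using Suc.prems by (auto simp: smk_Suc)
    then show "smk k S (\<lambda>y. f y *\<^sub>R frechet_derivative g (at y) v + frechet_derivative f (at y) v *\<^sub>R g y)"
      using Suc.IH fk by (intro smk_add[OF assms(1)]) auto
  qed
  then show ?case using df dg by (simp add: smk_Suc differentiable_on_scaleR)
qed




lemma smk_comp:
  fixes f :: "'a::euclidean_space \<Rightarrow> 'b::euclidean_space" and g :: "'b \<Rightarrow> 'c::real_normed_vector"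
  assumes "open S" "open T" "f ` S \<subseteq> T" "smk k T g" "smk k S f"
  shows "smk k S (\<lambda>x. g (f x))"
  using assms(4,5)
proof (induction k arbitrary: g)
  case 0
  have "(\<lambda>x. g (f x)) differentiable_on S"
    unfolding differentiable_on_eq_differentiable_at[OF assms(1)]
  proof
    fix y assume y: "y \<in> S"
    have "f y \<in> T" using y assms(3) by auto
    have "((\<lambda>x. g (f x)) has_derivative (\<lambda>w. frechet_derivative g (at (f y)) (frechet_derivative f (at y) w))) (at y)"
      using diff_on_at[OF assms(1) _ y] diff_on_at[OF assms(2) _ \<open>f y \<in> T\<close>] 0
      by (metis has_derivative_compose smk_0)
    then show "(\<lambda>x. g (f x)) differentiable at y" unfolding differentiable_def by blast
  qed
  then show ?case by (simp add: smk_0)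
next
  case (Suc k)
  have df: "f differentiable_on S" and dg: "g differentiable_on T"
    using Suc.prems by (auto simp: smk_Suc)
  have fk: "smk k S f" using Suc.prems smk_Suc_mono by auto
  have der: "((\<lambda>x. g (f x)) has_derivative (\<lambda>w. frechet_derivative g (at (f y)) (frechet_derivative f (at y) w))) (at y)"
    if y: "y \<in> S" for y
  proof -
    have "f y \<in> T" using y assms(3) by auto
    show ?thesis
      using diff_on_at[OF assms(1) df y] diff_on_at[OF assms(2) dg \<open>f y \<in> T\<close>]
      by (rule has_derivative_compose)
  qed
  have dgf: "(\<lambda>x. g (f x)) differentiable_on S"
    unfolding differentiable_on_eq_differentiable_at[OF assms(1)] differentiable_def
    using der by blast
  have "smk k S (\<lambda>x. frechet_derivative (\<lambda>x. g (f x)) (at x) v)" for v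
  proof (rule smk_cong[OF assms(1)])
    fix y assume y: "y \<in> S"
    have "f y \<in> T" using y assms(3) by auto
    have lin: "linear (frechet_derivative g (at (f y)))"
      using diff_on_at[OF assms(2) dg \<open>f y \<in> T\<close>] has_derivative_linear by blast
    let ?Dg = "frechet_derivative g (at (f y))" and ?w = "frechet_derivative f (at y) v"
    have "?Dg ?w = ?Dg (\<Sum>b\<in>Basis. (?w \<bullet> b) *\<^sub>R b)" by (simp add: euclidean_representation)
    also have "\<dots> = (\<Sum>b\<in>Basis. (?w \<bullet> b) *\<^sub>R ?Dg b)"
      by (simp add: linear_sum[OF lin] linear_scale[OF lin])
    finally have e: "?Dg ?w = (\<Sum>b\<in>Basis. (?w \<bullet> b) *\<^sub>R ?Dg b)" .
    have "frechet_derivative (\<lambda>x. g (f x)) (at y) v = ?Dg ?w"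
      using frechet_derivative_at[OF der[OF y]] by metis
    then show "(\<Sum>b\<in>Basis. (frechet_derivative f (at y) v \<bullet> b) *\<^sub>R frechet_derivative g (at (f y)) b) = frechet_derivative (\<lambda>x. g (f x)) (at y) v"
      using e by simp
  next
    show "smk k S (\<lambda>y. \<Sum>b\<in>Basis. (frechet_derivative f (at y) v \<bullet> b) *\<^sub>R frechet_derivative g (at (f y)) b)"
    proof (rule smk_sum[OF assms(1) finite_Basis])
      fix b :: 'b assume "b \<in> Basis"
      have a1: "smk k S (\<lambda>y. frechet_derivative f (at y) v \<bullet> b)"
        using Suc.prems(2) by (intro smk_linear[OF assms(1) bounded_linear_inner_left]) (auto simp: smk_Suc)
      have a2: "smk k S (\<lambda>y. frechet_derivative g (at (f y)) b)"
        using Suc.prems(1) fk by (intro Suc.IH) (auto simp: smk_Suc)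
      show "smk k S (\<lambda>y. (frechet_derivative f (at y) v \<bullet> b) *\<^sub>R frechet_derivative g (at (f y)) b)"
        using smk_scaleR[OF assms(1) a1 a2] .
    qed
  qed
  then show ?case using dgf by (simp add: smk_Suc)
qed

lemma smooth_on_smk: "smooth_on S h \<longleftrightarrow> open S \<and> (\<forall>k. smk k S h)"
  unfolding smooth_on_def iter_derivs_eq smk_def by auto

lemma smooth_on_open: "smooth_on S h \<Longrightarrow> open S"
  by (simp add: smooth_on_def)

lemma smooth_on_comp:
  fixes f :: "'a::euclidean_space \<Rightarrow> 'b::euclidean_space" and g :: "'b \<Rightarrow> 'c::euclidean_space"
  assumes "smooth_on T g" "smooth_on S f" "f ` S \<subseteq> T"
  shows "smooth_on S (\<lambda>x. g (f x))"
  using assms smk_comp unfolding smooth_on_smk by blast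

lemma smooth_on_cong:
  assumes "smooth_on S f" "\<And>x. x \<in> S \<Longrightarrow> f x = g x"
  shows "smooth_on S g"
  using assms smk_cong unfolding smooth_on_smk by blast

lemma smooth_on_subset:
  assumes "smooth_on S f" "open N" "N \<subseteq> S"
  shows "smooth_on N f"
  using assms unfolding smooth_on_smk smk_def by (meson differentiable_on_subset)

lemma smooth_on_local:
  assumes "open S" "\<And>x. x \<in> S \<Longrightarrow> \<exists>N. open N \<and> x \<in> N \<and> smooth_on N h"
  shows "smooth_on S h"
  unfolding smooth_on_def
proof (intro conjI ballI)
  show "open S" by fact
  fix g assume g: "g \<in> iter_derivs h"
  show "g differentiable_on S"
    unfolding differentiable_on_eq_differentiable_at[OF assms(1)]
  proof
    fix x assume "x \<in> S"
    then obtain N where N: "open N" "x \<in> N" "smooth_on N h" using assms(2) by blast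
    then have "g differentiable_on N" using g by (simp add: smooth_on_def)
    then show "g differentiable at x" using N differentiable_on_eq_differentiable_at by blast
  qed
qed

lemma smooth_on_pair:
  fixes f :: "'a::euclidean_space \<Rightarrow> 'b::euclidean_space" and g :: "'a \<Rightarrow> 'c::euclidean_space"
  assumes "smooth_on S f" "smooth_on S g"
  shows "smooth_on S (\<lambda>x. (f x, g x))"
proof -
  have o: "open S" using assms smooth_on_open by blast
  have l1: "bounded_linear (\<lambda>a::'b. (a, 0::'c))"
    by (intro bounded_linear_Pair bounded_linear_ident bounded_linear_zero)
  have l2: "bounded_linear (\<lambda>b::'c. (0::'b, b))"
    by (intro bounded_linear_Pair bounded_linear_ident bounded_linear_zero)
  have "smk k S (\<lambda>x. (f x, 0::'c) + (0::'b, g x))" for k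
    using assms unfolding smooth_on_smk
    by (intro smk_add[OF o] smk_linear[OF o l1] smk_linear[OF o l2]) auto
  then show ?thesis using o unfolding smooth_on_smk by simp
qed




lemma smo_I:
  assumes "open W" "continuous_on W f"
    "\<And>U \<phi> V \<psi>. (U,\<phi>) \<in> A \<Longrightarrow> (V,\<psi>) \<in> B \<Longrightarrow> smooth_on (\<phi> ` (U \<inter> W \<inter> f -` V)) (\<psi> \<circ> f \<circ> inv_into U \<phi>)"
  shows "smooth_map_open A B W f"
  using assms unfolding smooth_map_open_def by auto

lemma smo_D:
  assumes "smooth_map_open A B W f"
  shows "open W" "continuous_on W f"
    "\<And>U \<phi> V \<psi>. (U,\<phi>) \<in> A \<Longrightarrow> (V,\<psi>) \<in> B \<Longrightarrow> smooth_on (\<phi> ` (U \<inter> W \<inter> f -` V)) (\<psi> \<circ> f \<circ> inv_into U \<phi>)"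
  using assms unfolding smooth_map_open_def by auto

lemma cont_open_vimage:
  assumes "open W" "continuous_on W f" "open V" "open U"
  shows "open (U \<inter> W \<inter> f -` V)"
proof -
  have "open (f -` V \<inter> W)" using continuous_on_open_vimage[OF assms(1)] assms(2,3) by blast
  moreover have "U \<inter> W \<inter> f -` V = U \<inter> (f -` V \<inter> W)" by auto
  ultimately show ?thesis using assms(4) by (simp add: open_Int)
qed

definition watlas :: "('a::topological_space set \<times> ('a \<Rightarrow> 'e)) set \<Rightarrow> bool" where
  "watlas B \<longleftrightarrow> (\<forall>x. \<exists>V \<gamma>. (V,\<gamma>) \<in> B \<and> x \<in> V) \<and> (\<forall>V \<gamma>. (V,\<gamma>) \<in> B \<longrightarrow> open V \<and> inj_on \<gamma> V)"

lemma chart_props: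
  assumes "smooth_atlas A" "(U,\<phi>) \<in> A"
  shows "open U" "open (\<phi> ` U)" "homeomorphism U (\<phi> ` U) \<phi> (inv_into U \<phi>)"
  using assms unfolding smooth_atlas_def is_chart_def by auto

lemma chart_inj:
  assumes "smooth_atlas A" "(U,\<phi>) \<in> A"
  shows "inj_on \<phi> U"
proof -
  have "\<And>x. x \<in> U \<Longrightarrow> inv_into U \<phi> (\<phi> x) = x"
    using chart_props(3)[OF assms] unfolding homeomorphism_def by auto
  then show ?thesis by (metis inj_onI)
qed

lemma chart_open_image:
  assumes "smooth_atlas A" "(U,\<phi>) \<in> A" "open X" "X \<subseteq> U"
  shows "open (\<phi> ` X)"
proof -
  have "openin (top_of_set U) X" using assms chart_props(1)[OF assms(1,2)] by (simp add: openin_open_eq)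
  then have "openin (top_of_set (\<phi> ` U)) (\<phi> ` X)"
    by (rule homeomorphism_imp_open_map[OF chart_props(3)[OF assms(1,2)]])
  then show ?thesis using chart_props(2)[OF assms(1,2)] by (simp add: openin_open_eq)
qed

lemma watlas_smooth:
  assumes "smooth_atlas A" shows "watlas A"
proof -
  have "\<exists>V \<gamma>. (V,\<gamma>) \<in> A \<and> x \<in> V" for x
  proof -
    have "x \<in> \<Union>(fst ` A)" using assms unfolding smooth_atlas_def by auto
    then obtain c where "c \<in> A" "x \<in> fst c" by auto
    then show ?thesis by (metis prod.collapse)
  qed
  then show ?thesis unfolding watlas_def using chart_props(1)[OF assms] chart_inj[OF assms] by blast
qed

lemma watlas_prod:
  fixes A :: "('a::topological_space set \<times> ('a \<Rightarrow> 'e::euclidean_space)) set" and B :: "('b::topological_space set \<times> ('b \<Rightarrow> 'f::euclidean_space)) set"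
  assumes "watlas A" "watlas B"
  shows "watlas (prod_atlas A B)"
proof -
  have 1: "\<exists>V \<gamma>. (V, \<gamma>) \<in> prod_atlas A B \<and> x \<in> V" for x :: "'a \<times> 'b"
  proof -
    obtain U \<phi> where U: "(U,\<phi>) \<in> A" "fst x \<in> U" using assms(1) unfolding watlas_def by blast
    obtain V2 \<psi> where V: "(V2,\<psi>) \<in> B" "snd x \<in> V2" using assms(2) unfolding watlas_def by blast
    have m: "(U \<times> V2, \<lambda>(a,b). (\<phi> a, \<psi> b)) \<in> prod_atlas A B"
      using U V unfolding prod_atlas_def by blast
    have "x \<in> U \<times> V2" using U V by (auto simp: mem_Times_iff)
    then show ?thesis using m by blast
  qed
  have 2: "open V \<and> inj_on \<gamma> V" if mem: "(V, \<gamma>) \<in> prod_atlas A B" for V \<gamma>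
  proof -
    obtain U1 \<phi>1 U2 \<phi>2 where e: "V = U1 \<times> U2" "\<gamma> = (\<lambda>(x,y). (\<phi>1 x, \<phi>2 y))" "(U1,\<phi>1) \<in> A" "(U2,\<phi>2) \<in> B"
      using mem unfolding prod_atlas_def by blast
    have "open U1" "inj_on \<phi>1 U1" "open U2" "inj_on \<phi>2 U2"
      using e assms unfolding watlas_def by auto
    then show "open V \<and> inj_on \<gamma> V" using e by (auto simp: open_Times inj_on_def)
  qed
  show ?thesis unfolding watlas_def using 1 2 by blast
qed

lemma smooth_map_comp:
  assumes A: "smooth_atlas A" and B: "watlas B" and C: "watlas C"
    and f: "smooth_map_open A B W f" and g: "smooth_map_open B C W' g" and fW: "f ` W \<subseteq> W'"
  shows "smooth_map_open A C W (g \<circ> f)"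
proof (rule smo_I)
  show oW: "open W" using smo_D(1)[OF f] .
  have oW': "open W'" using smo_D(1)[OF g] .
  have cf: "continuous_on W f" using smo_D(2)[OF f] .
  have cg: "continuous_on W' g" using smo_D(2)[OF g] .
  show cgf: "continuous_on W (g \<circ> f)"
    by (rule continuous_on_compose[OF cf continuous_on_subset[OF cg fW]])
  fix U \<phi> V \<psi> assume U: "(U,\<phi>) \<in> A" and V: "(V,\<psi>) \<in> C"
  have oV: "open V" using V C unfolding watlas_def by auto
  have oU: "open U" using chart_props(1)[OF A U] .
  have oX: "open (U \<inter> W \<inter> (g \<circ> f) -` V)"
    by (rule cont_open_vimage[OF oW cgf oV oU])
  show "smooth_on (\<phi> ` (U \<inter> W \<inter> (g \<circ> f) -` V)) (\<psi> \<circ> (g \<circ> f) \<circ> inv_into U \<phi>)"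
  proof (rule smooth_on_local)
    show "open (\<phi> ` (U \<inter> W \<inter> (g \<circ> f) -` V))" by (rule chart_open_image[OF A U oX]) auto
    fix y assume "y \<in> \<phi> ` (U \<inter> W \<inter> (g \<circ> f) -` V)"
    then obtain x where x: "x \<in> U" "x \<in> W" "g (f x) \<in> V" "y = \<phi> x" by auto
    obtain V' \<gamma> where V': "(V',\<gamma>) \<in> B" "f x \<in> V'" using B unfolding watlas_def by blast
    have oV': "open V'" and injV': "inj_on \<gamma> V'" using V' B unfolding watlas_def by auto
    define Z where "Z = V' \<inter> (W' \<inter> g -` V)"
    have oZ: "open Z" unfolding Z_def using cont_open_vimage[OF oW' cg oV oV'] by (simp add: Int_assoc)
    define X where "X = U \<inter> W \<inter> f -` Z"
    have oX2: "open X" unfolding X_def by (rule cont_open_vimage[OF oW cf oZ oU])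
    define N where "N = \<phi> ` X"
    have oN: "open N" unfolding N_def by (rule chart_open_image[OF A U oX2]) (auto simp: X_def)
    have yN: "y \<in> N" using x V' fW unfolding N_def X_def Z_def by auto
    have injU: "inj_on \<phi> U" by (rule chart_inj[OF A U])
    have h1: "smooth_on (\<phi> ` (U \<inter> W \<inter> f -` V')) (\<gamma> \<circ> f \<circ> inv_into U \<phi>)"
      by (rule smo_D(3)[OF f U V'(1)])
    have h1N: "smooth_on N (\<gamma> \<circ> f \<circ> inv_into U \<phi>)"
      by (rule smooth_on_subset[OF h1 oN]) (auto simp: N_def X_def Z_def)
    have h2: "smooth_on (\<gamma> ` (V' \<inter> W' \<inter> g -` V)) (\<psi> \<circ> g \<circ> inv_into V' \<gamma>)"
      by (rule smo_D(3)[OF g V'(1) V])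
    have img: "(\<gamma> \<circ> f \<circ> inv_into U \<phi>) ` N \<subseteq> \<gamma> ` (V' \<inter> W' \<inter> g -` V)"
    proof
      fix w assume "w \<in> (\<gamma> \<circ> f \<circ> inv_into U \<phi>) ` N"
      then obtain z where z: "z \<in> X" "w = \<gamma> (f (inv_into U \<phi> (\<phi> z)))" unfolding N_def by auto
      have "inv_into U \<phi> (\<phi> z) = z" using z(1) injU unfolding X_def by (auto intro: inv_into_f_f)
      then show "w \<in> \<gamma> ` (V' \<inter> W' \<inter> g -` V)" using z unfolding X_def Z_def by auto
    qed
    have comp: "smooth_on N (\<lambda>n. (\<psi> \<circ> g \<circ> inv_into V' \<gamma>) ((\<gamma> \<circ> f \<circ> inv_into U \<phi>) n))"
      by (rule smooth_on_comp[OF h2 h1N img])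
    have "smooth_on N (\<psi> \<circ> (g \<circ> f) \<circ> inv_into U \<phi>)"
    proof (rule smooth_on_cong[OF comp])
      fix n assume "n \<in> N"
      then obtain z where z: "z \<in> X" "n = \<phi> z" unfolding N_def by auto
      have i1: "inv_into U \<phi> (\<phi> z) = z" using z(1) injU unfolding X_def by (auto intro: inv_into_f_f)
      have i2: "inv_into V' \<gamma> (\<gamma> (f z)) = f z" using z(1) injV' unfolding X_def Z_def by (auto intro: inv_into_f_f)
      show "(\<psi> \<circ> g \<circ> inv_into V' \<gamma>) ((\<gamma> \<circ> f \<circ> inv_into U \<phi>) n) = (\<psi> \<circ> (g \<circ> f) \<circ> inv_into U \<phi>) n"
        using i1 i2 z by simp
    qed
    then show "\<exists>N. open N \<and> y \<in> N \<and> smooth_on N (\<psi> \<circ> (g \<circ> f) \<circ> inv_into U \<phi>)"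
      using oN yN by blast
  qed
qed

lemma smooth_map_id:
  assumes A: "smooth_atlas A" and oW: "open W"
  shows "smooth_map_open A A W id"
proof (rule smo_I)
  show "open W" by fact
  show "continuous_on W id" by (rule continuous_on_id')
  fix U \<phi> V \<psi> assume U: "(U,\<phi>) \<in> A" and V: "(V,\<psi>) \<in> A"
  have t: "smooth_on (\<phi> ` (U \<inter> V)) (\<psi> \<circ> inv_into U \<phi>)"
    using A U V unfolding smooth_atlas_def by fast
  have oV: "open V" "open U" using chart_props(1)[OF A U] chart_props(1)[OF A V] by auto
  have o: "open (\<phi> ` (U \<inter> W \<inter> id -` V))"
    by (rule chart_open_image[OF A U]) (use oV oW in auto)
  show "smooth_on (\<phi> ` (U \<inter> W \<inter> id -` V)) (\<psi> \<circ> id \<circ> inv_into U \<phi>)"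
    using smooth_on_subset[OF t o] by auto
qed

lemma smooth_map_pair:
  assumes A: "smooth_atlas A" and f: "smooth_map_open A B W f" and g: "smooth_map_open A C W g"
  shows "smooth_map_open A (prod_atlas B C) W (\<lambda>x. (f x, g x))"
proof (rule smo_I)
  show "open W" using smo_D(1)[OF f] .
  show "continuous_on W (\<lambda>x. (f x, g x))" using smo_D(2)[OF f] smo_D(2)[OF g] by (rule continuous_on_Pair)
  fix U \<phi> V \<gamma> assume U: "(U,\<phi>) \<in> A" and V: "(V,\<gamma>) \<in> prod_atlas B C"
  then obtain V1 \<psi>1 V2 \<psi>2 where e: "V = V1 \<times> V2" "\<gamma> = (\<lambda>(x,y). (\<psi>1 x, \<psi>2 y))" "(V1,\<psi>1) \<in> B" "(V2,\<psi>2) \<in> C"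
    unfolding prod_atlas_def by auto
  have injU: "inj_on \<phi> U" by (rule chart_inj[OF A U])
  have s1: "smooth_on (\<phi> ` (U \<inter> W \<inter> f -` V1)) (\<psi>1 \<circ> f \<circ> inv_into U \<phi>)" by (rule smo_D(3)[OF f U e(3)])
  have s2: "smooth_on (\<phi> ` (U \<inter> W \<inter> g -` V2)) (\<psi>2 \<circ> g \<circ> inv_into U \<phi>)" by (rule smo_D(3)[OF g U e(4)])
  have seq: "\<phi> ` (U \<inter> W \<inter> (\<lambda>x. (f x, g x)) -` V) = \<phi> ` (U \<inter> W \<inter> f -` V1) \<inter> \<phi> ` (U \<inter> W \<inter> g -` V2)"
  proof -
    have "U \<inter> W \<inter> (\<lambda>x. (f x, g x)) -` V = (U \<inter> W \<inter> f -` V1) \<inter> (U \<inter> W \<inter> g -` V2)"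
      using e(1) by auto
    then show ?thesis using inj_on_image_Int[OF injU, of "U \<inter> W \<inter> f -` V1" "U \<inter> W \<inter> g -` V2"] by auto
  qed
  have o: "open (\<phi> ` (U \<inter> W \<inter> f -` V1) \<inter> \<phi> ` (U \<inter> W \<inter> g -` V2))"
    using smooth_on_open[OF s1] smooth_on_open[OF s2] by blast
  have p: "smooth_on (\<phi> ` (U \<inter> W \<inter> f -` V1) \<inter> \<phi> ` (U \<inter> W \<inter> g -` V2))
      (\<lambda>x. ((\<psi>1 \<circ> f \<circ> inv_into U \<phi>) x, (\<psi>2 \<circ> g \<circ> inv_into U \<phi>) x))"
  proof -
    have p1: "smooth_on (\<phi> ` (U \<inter> W \<inter> f -` V1) \<inter> \<phi> ` (U \<inter> W \<inter> g -` V2)) (\<psi>1 \<circ> f \<circ> inv_into U \<phi>)"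
      by (rule smooth_on_subset[OF s1 o]) auto
    have p2: "smooth_on (\<phi> ` (U \<inter> W \<inter> f -` V1) \<inter> \<phi> ` (U \<inter> W \<inter> g -` V2)) (\<psi>2 \<circ> g \<circ> inv_into U \<phi>)"
      by (rule smooth_on_subset[OF s2 o]) auto
    show ?thesis by (rule smooth_on_pair[OF p1 p2])
  qed
  show "smooth_on (\<phi> ` (U \<inter> W \<inter> (\<lambda>x. (f x, g x)) -` V)) (\<gamma> \<circ> (\<lambda>x. (f x, g x)) \<circ> inv_into U \<phi>)"
    unfolding seq by (rule smooth_on_cong[OF p]) (simp add: e(2))
qed

lemma smooth_map_local:
  assumes A: "smooth_atlas A" and B: "watlas B"
    and loc: "\<And>x. \<exists>W. x \<in> W \<and> smooth_map_open A B W f"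
  shows "smooth_map A B f"
  unfolding smooth_map_def
proof (rule smo_I)
  show "open UNIV" by simp
  let ?S = "{W. smooth_map_open A B W f}"
  have "continuous_on (\<Union>?S) f"
    by (rule continuous_on_open_Union) (auto dest: smo_D)
  moreover have "\<Union>?S = UNIV" using loc by blast
  ultimately show c: "continuous_on UNIV f" by simp
  fix U \<phi> V \<psi> assume U: "(U,\<phi>) \<in> A" and V: "(V,\<psi>) \<in> B"
  have oV: "open V" using V B unfolding watlas_def by auto
  have oU: "open U" using chart_props(1)[OF A U] .
  have oX: "open (U \<inter> UNIV \<inter> f -` V)"
    by (rule cont_open_vimage[OF open_UNIV c oV oU])
  show "smooth_on (\<phi> ` (U \<inter> UNIV \<inter> f -` V)) (\<psi> \<circ> f \<circ> inv_into U \<phi>)"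
  proof (rule smooth_on_local)
    show "open (\<phi> ` (U \<inter> UNIV \<inter> f -` V))" by (rule chart_open_image[OF A U oX]) auto
    fix y assume "y \<in> \<phi> ` (U \<inter> UNIV \<inter> f -` V)"
    then obtain x where x: "x \<in> U" "f x \<in> V" "y = \<phi> x" by auto
    obtain W where W: "x \<in> W" "smooth_map_open A B W f" using loc by blast
    have s: "smooth_on (\<phi> ` (U \<inter> W \<inter> f -` V)) (\<psi> \<circ> f \<circ> inv_into U \<phi>)" by (rule smo_D(3)[OF W(2) U V])
    show "\<exists>N. open N \<and> y \<in> N \<and> smooth_on N (\<psi> \<circ> f \<circ> inv_into U \<phi>)"
    proof (intro exI conjI)
      show "open (\<phi> ` (U \<inter> W \<inter> f -` V))" by (rule smooth_on_open[OF s])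
      show "y \<in> \<phi> ` (U \<inter> W \<inter> f -` V)" using x W(1) by auto
    qed (rule s)
  qed
qed

lemma smooth_map_cong:
  assumes A: "smooth_atlas A" and F: "smooth_map_open A B W F" and eq: "\<And>q. q \<in> W \<Longrightarrow> F q = f q"
  shows "smooth_map_open A B W f"
proof (rule smo_I)
  show "open W" using smo_D(1)[OF F] .
  show "continuous_on W f" using continuous_on_cong[THEN iffD1, OF refl _ smo_D(2)[OF F]] eq by simp
  fix U \<phi> V \<psi> assume U: "(U,\<phi>) \<in> A" and V: "(V,\<psi>) \<in> B"
  have injU: "inj_on \<phi> U" by (rule chart_inj[OF A U])
  have se: "U \<inter> W \<inter> F -` V = U \<inter> W \<inter> f -` V" using eq by auto
  have s: "smooth_on (\<phi> ` (U \<inter> W \<inter> f -` V)) (\<psi> \<circ> F \<circ> inv_into U \<phi>)" using smo_D(3)[OF F U V] se by simp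
  show "smooth_on (\<phi> ` (U \<inter> W \<inter> f -` V)) (\<psi> \<circ> f \<circ> inv_into U \<phi>)"
  proof (rule smooth_on_cong[OF s])
    fix n assume "n \<in> \<phi> ` (U \<inter> W \<inter> f -` V)"
    then obtain z where z: "z \<in> U" "z \<in> W" "n = \<phi> z" by auto
    have "inv_into U \<phi> (\<phi> z) = z" using z injU by (auto intro: inv_into_f_f)
    then show "(\<psi> \<circ> F \<circ> inv_into U \<phi>) n = (\<psi> \<circ> f \<circ> inv_into U \<phi>) n" using z eq by simp
  qed
qed

lemma smooth_map_restrict:
  assumes A: "smooth_atlas A" and B: "watlas B" and f: "smooth_map_open A B W f"
    and oW': "open W'" and sub: "W' \<subseteq> W"
  shows "smooth_map_open A B W' f"
proof (rule smo_I[OF oW'])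
  show c: "continuous_on W' f" using continuous_on_subset[OF smo_D(2)[OF f] sub] .
  fix U \<phi> V \<psi> assume U: "(U,\<phi>) \<in> A" and V: "(V,\<psi>) \<in> B"
  have oV: "open V" using V B unfolding watlas_def by auto
  have oU: "open U" using chart_props(1)[OF A U] .
  have oX: "open (U \<inter> W' \<inter> f -` V)"
    by (rule cont_open_vimage[OF oW' c oV oU])
  have o: "open (\<phi> ` (U \<inter> W' \<inter> f -` V))" by (rule chart_open_image[OF A U oX]) auto
  show "smooth_on (\<phi> ` (U \<inter> W' \<inter> f -` V)) (\<psi> \<circ> f \<circ> inv_into U \<phi>)"
    by (rule smooth_on_subset[OF smo_D(3)[OF f U V] o]) (use sub in auto)
qed




lemma equiv_aux:
  assumes su: "\<And>m. s (u m) = m" and tu: "\<And>m. t (u m) = m"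
    and st: "\<And>g h. s g = t h \<Longrightarrow> t (mul g h) = t g"
    and ul: "\<And>g. mul (u (t g)) g = g"
    and sP: "\<And>g. s (\<Psi> g) = s g" and sF: "\<And>g. s (\<Phi> g) = s g"
    and eqP: "\<And>g h. s g = t h \<Longrightarrow> \<Psi> (mul g h) = mul (\<Psi> g) h"
    and inv: "\<And>g. \<Psi> (\<Phi> g) = g"
  shows "t (\<Psi> (u (t (\<Phi> (u m))))) = m"
proof -
  define a where "a = \<Phi> (u m)"
  have sa: "s a = m" unfolding a_def using sF su by simp
  have "\<Psi> a = \<Psi> (mul (u (t a)) a)" using ul by simp
  also have "\<dots> = mul (\<Psi> (u (t a))) a" using eqP su by simp
  finally have e: "u m = mul (\<Psi> (u (t a))) a" using inv unfolding a_def by simp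
  have "m = t (u m)" using tu by simp
  also have "\<dots> = t (\<Psi> (u (t a)))" using e st sP su by simp
  finally show ?thesis unfolding a_def by simp
qed

lemma left_mult_smooth:
  assumes LG: "lie_groupoid AG AM s t u i mul"
    and b: "smooth_map AM AG \<beta>" and sb: "\<And>m. s (\<beta> m) = m"
  shows "smooth_map AG AG (left_mult t mul \<beta>)"
proof -
  have AG: "smooth_atlas AG" and AM: "smooth_atlas AM" and tS: "smooth_map AG AM t"
    and mS: "smooth_map_on (prod_atlas AG AG) AG (composable s t) (\<lambda>(g,h). mul g h)"
    using LG unfolding lie_groupoid_def submersion_def by auto
  have wG: "watlas AG" and wM: "watlas AM" using watlas_smooth AG AM by auto
  have wP: "watlas (prod_atlas AG AG)" using watlas_prod[OF wG wG] .
  define P where "P = (\<lambda>g. (\<beta> (t g), g))"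
  have bt: "smooth_map_open AG AG UNIV (\<beta> \<circ> t)"
    using smooth_map_comp[OF AG wM wG tS[unfolded smooth_map_def] b[unfolded smooth_map_def]] by simp
  have idm: "smooth_map_open AG AG UNIV id" using smooth_map_id[OF AG open_UNIV] .
  have PS: "smooth_map_open AG (prod_atlas AG AG) UNIV P"
    using smooth_map_pair[OF AG bt idm] unfolding P_def by simp
  have cP: "continuous_on UNIV P" using smo_D(2)[OF PS] .
  show ?thesis
  proof (rule smooth_map_local[OF AG wG])
    fix x
    have "P x \<in> composable s t" unfolding P_def composable_def using sb by simp
    then obtain W F where WF: "P x \<in> W" "smooth_map_open (prod_atlas AG AG) AG W F"
      "\<And>q. q \<in> W \<inter> composable s t \<Longrightarrow> F q = (\<lambda>(g,h). mul g h) q"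
      using mS unfolding smooth_map_on_def by blast
    have oW: "open W" using smo_D(1)[OF WF(2)] .
    define W1 where "W1 = P -` W"
    have oW1: "open W1" using cont_open_vimage[OF open_UNIV cP oW open_UNIV] unfolding W1_def by simp
    have P1: "smooth_map_open AG (prod_atlas AG AG) W1 P"
      by (rule smooth_map_restrict[OF AG wP PS oW1]) simp
    have FP: "smooth_map_open AG AG W1 (F \<circ> P)"
      by (rule smooth_map_comp[OF AG wP wG P1 WF(2)]) (auto simp: W1_def)
    have "smooth_map_open AG AG W1 (left_mult t mul \<beta>)"
    proof (rule smooth_map_cong[OF AG FP])
      fix q assume "q \<in> W1"
      then have "P q \<in> W \<inter> composable s t" unfolding W1_def P_def composable_def using sb by simp
      then show "(F \<circ> P) q = left_mult t mul \<beta> q"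
        using WF(3) unfolding P_def left_mult_def by simp
    qed
    moreover have "x \<in> W1" unfolding W1_def using WF(1) by simp
    ultimately show "\<exists>W. x \<in> W \<and> smooth_map_open AG AG W (left_mult t mul \<beta>)" by blast
  qed
qed

theorem mainTheorem3:
  fixes AG :: "('g::topological_space set \<times> ('g \<Rightarrow> 'e::euclidean_space)) set"
    and AM :: "('m::t2_space set \<times> ('m \<Rightarrow> 'f::euclidean_space)) set"
    and s t :: "'g \<Rightarrow> 'm" and u :: "'m \<Rightarrow> 'g" and i :: "'g \<Rightarrow> 'g"
    and mul :: "'g \<Rightarrow> 'g \<Rightarrow> 'g"
  assumes "lie_groupoid AG AM s t u i mul"
  shows "right_equivariant_diffeos AG s t mul =
         {left_mult t mul \<beta> | \<beta>. bisection AG AM s t \<beta>}"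
proof -
  note LG = assms
  have AG: "smooth_atlas AG" and AM: "smooth_atlas AM" and tS: "smooth_map AG AM t"
    and uS: "smooth_map AM AG u" and iS: "smooth_map AG AG i"
    using LG unfolding lie_groupoid_def submersion_def by auto
  have su: "\<And>m. s (u m) = m" and tu: "\<And>m. t (u m) = m"
    and smul: "\<And>g h. s g = t h \<Longrightarrow> s (mul g h) = s h"
    and tmul: "\<And>g h. s g = t h \<Longrightarrow> t (mul g h) = t g"
    and assoc: "\<And>g h k. s g = t h \<Longrightarrow> s h = t k \<Longrightarrow> mul (mul g h) k = mul g (mul h k)"
    and ul: "\<And>g. mul (u (t g)) g = g" and ur: "\<And>g. mul g (u (s g)) = g"
    and si: "\<And>g. s (i g) = t g" and ti: "\<And>g. t (i g) = s g"
    and ri: "\<And>g. mul g (i g) = u (t g)" and li: "\<And>g. mul (i g) g = u (s g)"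
    using LG unfolding lie_groupoid_def by auto
  have wG: "watlas AG" and wM: "watlas AM" using watlas_smooth AG AM by auto
  have comp: "smooth_map A C (g \<circ> f)" if "smooth_atlas A" "watlas B" "watlas C"
      "smooth_map A B f" "smooth_map B C g" for A B C f g
    using smooth_map_comp[OF that(1-3) that(4,5)[unfolded smooth_map_def]] unfolding smooth_map_def by simp
  show ?thesis
  proof (intro equalityI subsetI)
    fix \<Phi> assume "\<Phi> \<in> right_equivariant_diffeos AG s t mul"
    then have dF: "diffeo AG \<Phi>" and sF0: "s \<circ> \<Phi> = s"
      and eqF: "\<And>g h. s g = t h \<Longrightarrow> \<Phi> (mul g h) = mul (\<Phi> g) h"
      unfolding right_equivariant_diffeos_def by auto
    have sF: "\<And>g. s (\<Phi> g) = s g" using sF0 by (metis comp_apply)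
    have bF: "bij \<Phi>" and FS: "smooth_map AG AG \<Phi>" and PS: "smooth_map AG AG (inv \<Phi>)"
      using dF unfolding diffeo_def by auto
    define \<Psi> where "\<Psi> = inv \<Phi>"
    have PF: "\<And>g. \<Psi> (\<Phi> g) = g" unfolding \<Psi>_def using bF by (simp add: bij_is_inj)
    have FP: "\<And>g. \<Phi> (\<Psi> g) = g" unfolding \<Psi>_def using bF by (simp add: bij_is_surj surj_f_inv_f)
    have sP: "\<And>g. s (\<Psi> g) = s g" by (metis FP sF)
    have eqP: "\<Psi> (mul g h) = mul (\<Psi> g) h" if "s g = t h" for g h
    proof -
      have "\<Phi> (mul (\<Psi> g) h) = mul g h" using eqF[of "\<Psi> g" h] that sP FP by simp
      then show ?thesis using PF by metis
    qed
    define \<beta> where "\<beta> = \<Phi> \<circ> u"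
    have "\<Phi> = left_mult t mul \<beta>"
    proof
      fix g
      have "\<Phi> g = \<Phi> (mul (u (t g)) g)" using ul by simp
      also have "\<dots> = mul (\<Phi> (u (t g))) g" using eqF su by simp
      finally show "\<Phi> g = left_mult t mul \<beta> g" unfolding left_mult_def \<beta>_def by simp
    qed
    moreover have "bisection AG AM s t \<beta>"
      unfolding bisection_def
    proof (intro conjI)
      show "smooth_map AM AG \<beta>" unfolding \<beta>_def by (rule comp[OF AM wG wG uS FS])
      show "s \<circ> \<beta> = id" unfolding \<beta>_def using sF su by (simp add: fun_eq_iff)
      have e1: "(t \<circ> \<Psi> \<circ> u) \<circ> (t \<circ> \<beta>) = id"
        unfolding \<beta>_def using equiv_aux[OF su tu tmul ul sP sF eqP PF] by (simp add: fun_eq_iff)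
      have e2: "(t \<circ> \<beta>) \<circ> (t \<circ> \<Psi> \<circ> u) = id"
        unfolding \<beta>_def using equiv_aux[OF su tu tmul ul sF sP eqF FP] by (simp add: fun_eq_iff)
      have b: "bij (t \<circ> \<beta>)" using e1 e2 o_bij by blast
      have iv: "inv (t \<circ> \<beta>) = t \<circ> \<Psi> \<circ> u" using inv_unique_comp[OF e2 e1] .
      have s1: "smooth_map AM AM (t \<circ> \<beta>)" unfolding \<beta>_def
        using comp[OF AM wG wM comp[OF AM wG wG uS FS] tS] by (simp add: o_assoc)
      have s2: "smooth_map AM AM (t \<circ> \<Psi> \<circ> u)"
        using comp[OF AM wG wM comp[OF AM wG wG uS PS[folded \<Psi>_def]] tS] by (simp add: o_assoc)
      show "diffeo AM (t \<circ> \<beta>)" unfolding diffeo_def using b s1 s2 iv by simp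
    qed
    ultimately show "\<Phi> \<in> {left_mult t mul \<beta> | \<beta>. bisection AG AM s t \<beta>}" by blast
  next
    fix \<Phi> assume "\<Phi> \<in> {left_mult t mul \<beta> | \<beta>. bisection AG AM s t \<beta>}"
    then obtain \<beta> where F: "\<Phi> = left_mult t mul \<beta>" and bis: "bisection AG AM s t \<beta>" by blast
    have bS: "smooth_map AM AG \<beta>" and sb0: "s \<circ> \<beta> = id" and dp: "diffeo AM (t \<circ> \<beta>)"
      using bis unfolding bisection_def by auto
    have sb: "\<And>m. s (\<beta> m) = m" using sb0 by (metis comp_apply id_apply)
    define \<phi> where "\<phi> = t \<circ> \<beta>"
    have bp: "bij \<phi>" and ipS: "smooth_map AM AM (inv \<phi>)" using dp unfolding diffeo_def \<phi>_def by auto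
    have pip: "\<And>m. \<phi> (inv \<phi> m) = m" using bp by (simp add: bij_is_surj surj_f_inv_f)
    have ipp: "\<And>m. inv \<phi> (\<phi> m) = m" using bp by (simp add: bij_is_inj)
    define \<beta>' where "\<beta>' = i \<circ> \<beta> \<circ> inv \<phi>"
    have b'S: "smooth_map AM AG \<beta>'" unfolding \<beta>'_def
      using comp[OF AM wG wG comp[OF AM wM wG ipS bS] iS] by (simp add: o_assoc)
    have sb': "\<And>m. s (\<beta>' m) = m" unfolding \<beta>'_def using si pip unfolding \<phi>_def by simp
    define \<Phi>' where "\<Phi>' = left_mult t mul \<beta>'"
    have FS: "smooth_map AG AG \<Phi>" unfolding F by (rule left_mult_smooth[OF LG bS sb])
    have F'S: "smooth_map AG AG \<Phi>'" unfolding \<Phi>'_def by (rule left_mult_smooth[OF LG b'S sb'])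
    have e1: "\<Phi>' \<circ> \<Phi> = id"
    proof
      fix g
      define b where "b = \<beta> (t g)"
      have sbg: "s b = t g" unfolding b_def using sb by simp
      have "\<beta>' (t (mul b g)) = i b"
        using tmul[OF sbg] ipp unfolding \<beta>'_def b_def \<phi>_def by simp
      then have "(\<Phi>' \<circ> \<Phi>) g = mul (i b) (mul b g)"
        unfolding \<Phi>'_def F left_mult_def b_def by simp
      also have "\<dots> = mul (mul (i b) b) g" using assoc[of "i b" b g] si sbg by simp
      also have "\<dots> = g" using li sbg ul by simp
      finally show "(\<Phi>' \<circ> \<Phi>) g = id g" by simp
    qed
    have e2: "\<Phi> \<circ> \<Phi>' = id"
    proof
      fix g
      define c where "c = \<beta> (inv \<phi> (t g))"
      have tc: "t c = t g" unfolding c_def using pip unfolding \<phi>_def by (metis comp_apply)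
      have b'g: "\<beta>' (t g) = i c" unfolding \<beta>'_def c_def by simp
      have sig: "s (i c) = t g" using si tc by simp
      have tt: "t (mul (i c) g) = s c" using tmul[OF sig] ti by simp
      have "(\<Phi> \<circ> \<Phi>') g = mul (\<beta> (t (mul (\<beta>' (t g)) g))) (mul (\<beta>' (t g)) g)"
        unfolding \<Phi>'_def F left_mult_def by simp
      also have "\<dots> = mul (\<beta> (s c)) (mul (i c) g)" unfolding b'g tt ..
      also have "\<beta> (s c) = c" unfolding c_def using sb by simp
      also have "mul c (mul (i c) g) = mul (mul c (i c)) g" using assoc[of c "i c" g] ti sig by simp
      also have "\<dots> = g" using ri tc ul by simp
      finally show "(\<Phi> \<circ> \<Phi>') g = id g" by simp
    qed
    have bF: "bij \<Phi>" using e1 e2 o_bij by blast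
    have iF: "inv \<Phi> = \<Phi>'" using inv_unique_comp[OF e2 e1] .
    have "diffeo AG \<Phi>" unfolding diffeo_def using bF FS F'S iF by simp
    moreover have "s \<circ> \<Phi> = s" unfolding F left_mult_def using smul sb by (simp add: fun_eq_iff)
    moreover have "\<Phi> (mul g h) = mul (\<Phi> g) h" if "s g = t h" for g h
    proof -
      have "\<Phi> (mul g h) = mul (\<beta> (t g)) (mul g h)" unfolding F left_mult_def using tmul[OF that] by simp
      also have "\<dots> = mul (mul (\<beta> (t g)) g) h" using assoc[of "\<beta> (t g)" g h] sb that by simp
      finally show ?thesis unfolding F left_mult_def .
    qed
    ultimately show "\<Phi> \<in> right_equivariant_diffeos AG s t mul"
      unfolding right_equivariant_diffeos_def by blast
  qed
qed


end
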